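(* Let $K\ge 2$, let $m_1<\cdots<m_K$ be pairwise co-prime positive integers, $M$ a positive integer and $M_k=Mm_k$. Let $N_1,N_2$ be nonnegative integers, $r_{l,k}=\langle N_l\rangle_{M_k}$, $r_l^c=\langle N_l\rangle_M$, and $\tilde r_{l,k}=r_{l,k}+\Delta r_{l,k}$ ($l=1,2$, $k=1,\ldots,K$) with integer errors $\Delta r_{l,k}$; let $\tau=\max_{l,k}|\Delta r_{l,k}|$ and $\tilde r^c_{l,k}=\langle\tilde r_{l,k}\rangle_M$. Sort the $2K$ numbers $\tilde r^c_{l,k}$ (with multiplicity) as $s_1\le\cdots\le s_{2K}$, put $D_k=s_{k+1}-s_k$ ($1\le k\le 2K-1$), $D_{2K}=s_1-s_{2K}+M$; assume $\tau<M/8$, so that there is a unique $k_0\in\{1,\ldots,K\}$ with $D_{k_0}+D_{k_0+K}>M/2$, and define the multisets $\Omega_1=\{s_{k_0+1},\ldots,s_{k_0+K}\}$ and $\Omega_2=\{s_1,\ldots,s_K\}$ if $k_0=K$, $\Omega_2=\{s_{k_0+K+1}-M,\ldots,s_{2K}-M,s_1,\ldots,s_{k_0}\}$ if $k_0\neq K$. If in addition $M/4\le|d_M(r_1^c,r_2^c)|\le M/2$, then for every $k\in\{1,\ldots,K\}$ there exist $\omega\in\Omega_1$ and $\upsilon\in\Omega_2$ such that either $$d_M(\tilde r^c_{1,k},\omega)=0\ \text{ and }\ d_M(\tilde r^c_{2,k},\upsilon)=0,$$ or $$d_M(\tilde r^c_{2,k},\omega)=0\ \text{ and }\ d_M(\tilde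 r^c_{1,k},\upsilon)=0.$$
   Context: For a positive integer $n$ and an integer $x$, $\langle x\rangle_n$ is the unique element of $\{0,\ldots,n-1\}$ congruent to $x$ modulo $n$. For real $x$, $[x]$ denotes the rounding integer, i.e. the integer with $-1/2\le x-[x]<1/2$. For reals $x,y$ and $C>0$, the circular distance is $d_C(x,y)=x-y-\left[\frac{x-y}{C}\right]C$; in particular $d_C(x,y)=0$ iff $x-y$ is an integer multiple of $C$. *)

theory Defs
  imports Complex_Main "HOL-Library.Multiset"
begin

definition rnd :: "real \<Rightarrow> int" where
  "rnd x = \<lfloor>x + 1/2\<rfloor>"

definition circ_dist :: "real \<Rightarrow> real \<Rightarrow> real \<Rightarrow> real" where
  "circ_dist C x y = x - y - real_of_int (rnd ((x - y) / C)) * C"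

definition lres :: "int \<Rightarrow> int \<Rightarrow> int" where
  "lres n x = x mod n"

end

theory Submission
  imports Defs
begin

definition near :: "int \<Rightarrow> int \<Rightarrow> int \<Rightarrow> int \<Rightarrow> bool" where
  "near M t c y \<longleftrightarrow> (\<exists>e. \<bar>e\<bar> \<le> t \<and> M dvd (y - c - e))"

lemma near_shift: "near M t c y \<Longrightarrow> near M t c (y + M)"
  unfolding near_def
  by (metis add_diff_eq diff_add_eq dvd_add_left_iff dvd_refl)

lemma side:
  fixes M t c x0 x1 y0 y1 u U :: int
  assumes "8*t < M" "0 \<le> t"
    "x0 \<le> x1" "y0 \<le> y1"
    "x1 \<le> u" "u \<le> y0" "y1 \<le> U" "U \<le> x0+M"
    "near M t c u" "near M t c U"
  shows "(near M t c y0 \<and> y1 - y0 \<le> 2*t) \<or> (near M t c x1 \<and> x1 - x0 \<le> 2*t)"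
proof -
  obtain d where d: "\<bar>d\<bar> \<le> t" "M dvd (u - c - d)" using assms(9) unfolding near_def by blast
  obtain d' where d': "\<bar>d'\<bar> \<le> t" "M dvd (U - c - d')" using assms(10) unfolding near_def by blast
  have "M dvd (U - u - (d' - d))" using dvd_diff[OF d'(2) d(2)] by (simp add: algebra_simps)
  then obtain j where j: "U - u - (d' - d) = M * j" by (auto simp: dvd_def)
  have Mpos: "M > 0" using assms by linarith
  have "j = 0 \<or> j = 1"
  proof -
    have "j > -1"
    proof (rule ccontr)
      assume "\<not> j > -1" hence "j \<le> -1" by simp
      hence "M * j \<le> M * (-1)" using Mpos by (intro mult_left_mono) auto
      thus False using j assms d d' by linarith
    qed
    moreover have "j < 2"
    proof (rule ccontr)
      assume "\<not> j < 2" hence "j \<ge> 2" by simp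
      hence "M * j \<ge> M * 2" using Mpos by (intro mult_left_mono) auto
      thus False using j assms d d' by linarith
    qed
    ultimately show ?thesis by linarith
  qed
  thus ?thesis
  proof
    assume "j = 0"
    hence e: "U - u = d' - d" using j by simp
    have "near M t c y0" unfolding near_def
      apply (rule exI[of _ "d + (y0 - u)"])
      using d d' e assms by (auto simp: algebra_simps)
    thus ?thesis using e d d' assms by auto
  next
    assume "j = 1"
    hence e: "U - u = M + d' - d" using j by simp
    have "near M t c x1" unfolding near_def
      apply (rule exI[of _ "d - (u - x1)"])
      using d d' e assms by (auto simp: algebra_simps)
    thus ?thesis using e d d' assms by auto
  qed
qed

lemma core:
  fixes M t c1 c2 x0 x1 y0 y1 u w U W :: int
  assumes "8*t < M" "0 \<le> t"
    "\<And>y. near M t c1 y \<Longrightarrow> near M t c2 y \<Longrightarrow> False"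
    "x0 \<le> x1" "y0 \<le> y1" "M < 2*((x1-x0)+(y1-y0))"
    "x1 \<le> u" "u \<le> y0" "x1 \<le> w" "w \<le> y0" "y1 \<le> U" "U \<le> x0+M" "y1 \<le> W" "W \<le> x0+M"
    "near M t c1 u" "near M t c1 U" "near M t c2 w" "near M t c2 W"
  shows False
proof -
  have A: "(near M t c1 y0 \<and> y1 - y0 \<le> 2*t) \<or> (near M t c1 x1 \<and> x1 - x0 \<le> 2*t)"
    using side[OF assms(1,2,4,5,7,8,11,12,15,16)] .
  have B: "(near M t c2 y0 \<and> y1 - y0 \<le> 2*t) \<or> (near M t c2 x1 \<and> x1 - x0 \<le> 2*t)"
    using side[OF assms(1,2,4,5,9,10,13,14,17,18)] .
  from A B assms(3) assms(1,6) show False by auto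
qed

lemma rnd_int: "rnd (of_int q + x) = q" if "-1/2 \<le> x" "x < 1/2"
  unfolding rnd_def using that by (simp add: floor_eq_iff)

lemma cd_small:
  fixes a b e q :: int and M :: nat
  assumes "M > 0" "a - b = e + q * int M" "4 * \<bar>e\<bar> < int M"
  shows "circ_dist (real M) (of_int a) (of_int b) = of_int e"
proof -
  have "(real_of_int a - of_int b) / real M = of_int q + of_int e / real M"
    using assms(1) by (simp add: field_simps flip: of_int_diff) (metis assms(2) of_int_add of_int_mult of_int_of_nat_eq)
  moreover have "-1/2 \<le> real_of_int e / real M" "real_of_int e / real M < 1/2"
    using assms by (auto simp: field_simps abs_less_iff)
  ultimately have "rnd ((real_of_int a - of_int b) / real M) = q" using rnd_int by simp
  thus ?thesis unfolding circ_dist_def using assms(2)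
    by (metis add_diff_cancel_right' of_int_add of_int_diff of_int_mult of_int_of_nat_eq)
qed

lemma cd_self: "circ_dist C x x = 0"
  unfolding circ_dist_def rnd_def by simp

lemma cd_shift: "C > 0 \<Longrightarrow> circ_dist C x (x - C) = 0"
  unfolding circ_dist_def rnd_def by simp

lemma rtc_near:
  fixes M P N d :: int assumes "M > 0"
  shows "M dvd (((N mod (M*P)) + d) mod M - N mod M - d)"
proof -
  have "((N mod (M*P)) + d) mod M = (N + d) mod M"
    by (metis mod_add_left_eq mod_mult_self2_is_0 mod_mod_cancel dvd_triv_left)
  also have "\<dots> = (N mod M + d) mod M" by (simp add: mod_add_left_eq)
  finally have e: "((N mod (M*P)) + d) mod M - N mod M - d = (N mod M + d) mod M - (N mod M + d)" by simp
  have "(N mod M + d) mod M - (N mod M + d) = M * (- ((N mod M + d) div M))"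
    using div_mult_mod_eq[of "N mod M + d" M] by (simp add: algebra_simps)
  thus ?thesis unfolding e by simp
qed

theorem corollary2:
  fixes K M N1 N2 k0 :: nat and m :: "nat \<Rightarrow> nat" and \<Delta> :: "nat \<Rightarrow> nat \<Rightarrow> int"
    and N :: "nat \<Rightarrow> int" and r rt rtc :: "nat \<Rightarrow> nat \<Rightarrow> int" and rc :: "nat \<Rightarrow> int"
    and \<tau> :: int and s D :: "nat \<Rightarrow> int" and \<Omega>1 \<Omega>2 :: "int multiset"
  assumes K: "K \<ge> 2" and M: "M > 0"
    and mpos: "\<forall>k\<in>{1..K}. m k > 0"
    and mmono: "\<forall>i\<in>{1..K}. \<forall>j\<in>{1..K}. i < j \<longrightarrow> m i < m j"
    and mcop: "\<forall>i\<in>{1..K}. \<forall>j\<in>{1..K}. i \<noteq> j \<longrightarrow> coprime (m i) (m j)"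
  defines "N \<equiv> (\<lambda>l. if l = 1 then int N1 else int N2)"
    and "r \<equiv> (\<lambda>l k. lres (int M * int (m k)) (N l))"
    and "rc \<equiv> (\<lambda>l. lres (int M) (N l))"
    and "rt \<equiv> (\<lambda>l k. r l k + \<Delta> l k)"
    and "\<tau> \<equiv> Max {\<bar>\<Delta> l k\<bar> | l k. l \<in> {1,2} \<and> k \<in> {1..K}}"
    and "rtc \<equiv> (\<lambda>l k. lres (int M) (rt l k))"
    and "s \<equiv> (\<lambda>i. sort (map (rtc 1) [1..<K+1] @ map (rtc 2) [1..<K+1]) ! (i - 1))"
    and "D \<equiv> (\<lambda>i. if i < 2 * K then s (i + 1) - s i else s 1 - s (2 * K) + int M)"
  assumes tau: "real_of_int \<tau> < real M / 8"
    and k0: "k0 \<in> {1..K}" "real_of_int (D k0 + D (k0 + K)) > real M / 2"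
  defines "\<Omega>1 \<equiv> mset (map s [k0+1..<k0+K+1])"
    and "\<Omega>2 \<equiv> (if k0 = K then mset (map s [1..<K+1])
              else mset (map (\<lambda>i. s i - int M) [k0+K+1..<2*K+1] @ map s [1..<k0+1]))"
  assumes dlow: "real M / 4 \<le> \<bar>circ_dist (real M) (of_int (rc 1)) (of_int (rc 2))\<bar>"
    and dup: "\<bar>circ_dist (real M) (of_int (rc 1)) (of_int (rc 2))\<bar> \<le> real M / 2"
  shows "\<forall>k\<in>{1..K}. \<exists>\<omega>\<in>#\<Omega>1. \<exists>\<upsilon>\<in>#\<Omega>2.
           (circ_dist (real M) (of_int (rtc 1 k)) (of_int \<omega>) = 0 \<and>
            circ_dist (real M) (of_int (rtc 2 k)) (of_int \<upsilon>) = 0) \<or>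
           (circ_dist (real M) (of_int (rtc 2 k)) (of_int \<omega>) = 0 \<and>
            circ_dist (real M) (of_int (rtc 1 k)) (of_int \<upsilon>) = 0)"
  proof -
  let ?L = "map (rtc 1) [1..<K+1] @ map (rtc 2) [1..<K+1]"
  define xs where "xs = sort ?L"
  have s_eq: "\<And>i. s i = xs ! (i - 1)" unfolding s_def xs_def by simp
  have lenxs: "length xs = 2*K" unfolding xs_def by simp
  have sortedxs: "sorted xs" unfolding xs_def by simp
  have setxs: "set xs = set ?L" unfolding xs_def by simp
  define S where "S = {\<bar>\<Delta> l k\<bar> | l k. l \<in> {1,2} \<and> k \<in> {1..K}}"
  have "S \<subseteq> (\<lambda>(l,k). \<bar>\<Delta> l k\<bar>) ` ({1,2} \<times> {1..K})" unfolding S_def by auto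
  hence finS: "finite S" by (rule finite_subset) auto
  have tauS: "\<tau> = Max S" unfolding \<tau>_def S_def by simp
  have taub: "\<bar>\<Delta> l k\<bar> \<le> \<tau>" if "l \<in> {1,2}" "k \<in> {1..K}" for l k
    unfolding tauS using that finS by (intro Max_ge) (auto simp: S_def)
  have tau0: "0 \<le> \<tau>" using taub[of 1 1] K by force
  have tau8: "8*\<tau> < int M" using tau by linarith
  define P1 where "P1 = near (int M) \<tau> (rc 1)"
  define P2 where "P2 = near (int M) \<tau> (rc 2)"
  have Mpos: "int M > 0" using M by simp
  have nearrtc: "near (int M) \<tau> (rc l) (rtc l k)" if "l \<in> {1,2}" "k \<in> {1..K}" for l k
    unfolding near_def
  proof (rule exI[of _ "\<Delta> l k"], intro conjI)
    show "\<bar>\<Delta> l k\<bar> \<le> \<tau>" using taub that .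
    show "int M dvd (rtc l k - rc l - \<Delta> l k)"
      unfolding rtc_def rt_def r_def rc_def lres_def using rtc_near[OF Mpos, of "N l" "int (m k)" "\<Delta> l k"] by simp
  qed
  have excl: "False" if hy: "P1 y" "P2 y" for y
  proof -
    obtain e1 where e1: "\<bar>e1\<bar> \<le> \<tau>" "int M dvd (y - rc 1 - e1)" using hy(1) unfolding P1_def near_def by blast
    obtain e2 where e2: "\<bar>e2\<bar> \<le> \<tau>" "int M dvd (y - rc 2 - e2)" using hy(2) unfolding P2_def near_def by blast
    obtain a where a: "y - rc 1 - e1 = int M * a" using e1 by (auto simp: dvd_def)
    obtain b where b: "y - rc 2 - e2 = int M * b" using e2 by (auto simp: dvd_def)
    have eq: "rc 1 - rc 2 = (e2 - e1) + (b - a) * int M" using a b by (simp add: algebra_simps)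
    have "circ_dist (real M) (of_int (rc 1)) (of_int (rc 2)) = of_int (e2 - e1)"
    proof (rule cd_small[OF M eq])
      have "\<bar>e2 - e1\<bar> \<le> 2*\<tau>" using e1(1) e2(1) by (simp add: abs_le_iff)
      thus "4 * \<bar>e2 - e1\<bar> < int M" using tau8 by (smt (verit))
    qed
    hence "\<bar>circ_dist (real M) (of_int (rc 1)) (of_int (rc 2))\<bar> \<le> 2 * of_int \<tau>" using e1 e2 by linarith
    thus False using dlow tau by linarith
  qed
  have P12: "P1 v \<or> P2 v" if "v \<in> set xs" for v
    using that nearrtc unfolding setxs P1_def P2_def by auto
  have rng: "0 \<le> v \<and> v < int M" if "v \<in> set xs" for v
    using that Mpos unfolding setxs rtc_def lres_def by auto
  have cnt: "card {i. i < 2*K \<and> P (xs!i)} = K" if "\<forall>k\<in>{1..K}. P (rtc l k)" "\<forall>k\<in>{1..K}. \<not> P (rtc l' k)"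
    "(l = 1 \<and> l' = 2) \<or> (l = 2 \<and> l' = 1)" for P l l'
  proof -
    have "length (filter P xs) = size (filter_mset P (mset xs))" by (metis mset_filter size_mset)
    also have "\<dots> = size (filter_mset P (mset ?L))" unfolding xs_def by simp
    also have "\<dots> = length (filter P ?L)" by (metis mset_filter size_mset)
    also have "\<dots> = K" using that by (auto simp: filter_empty_conv)
    finally show ?thesis by (simp add: length_filter_conv_card lenxs)
  qed
  have cnt1: "card {i. i < 2*K \<and> P1 (xs!i)} = K"
  proof (rule cnt[of _ 1 2])
    show "\<forall>k\<in>{1..K}. P1 (rtc 1 k)" using nearrtc unfolding P1_def by auto
    show "\<forall>k\<in>{1..K}. \<not> P1 (rtc 2 k)"
    proof (intro ballI notI)
      fix k assume kk: "k \<in> {1..K}" and h1: "P1 (rtc 2 k)"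
      have h2: "P2 (rtc 2 k)" using nearrtc[of 2 k] kk unfolding P2_def by simp
      show False by (rule excl[OF h1 h2])
    qed
  qed simp
  have cnt2: "card {i. i < 2*K \<and> P2 (xs!i)} = K"
  proof (rule cnt[of _ 2 1])
    show "\<forall>k\<in>{1..K}. P2 (rtc 2 k)" using nearrtc unfolding P2_def by auto
    show "\<forall>k\<in>{1..K}. \<not> P2 (rtc 1 k)"
    proof (intro ballI notI)
      fix k assume kk: "k \<in> {1..K}" and h2: "P2 (rtc 1 k)"
      have h1: "P1 (rtc 1 k)" using nearrtc[of 1 k] kk unfolding P1_def by simp
      show False by (rule excl[OF h1 h2])
    qed
  qed simp
  define B where "B = {k0..<k0+K}"
  have cardB: "card B = K" unfolding B_def by simp
  have Bsub: "B \<subseteq> {i. i < 2*K}" using k0 unfolding B_def by auto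
  have k01: "1 \<le> k0" "k0 \<le> K" using k0 by auto
  have nth_mono: "xs!i \<le> xs!j" if "i \<le> j" "j < 2*K" for i j
    using sorted_nth_mono[OF sortedxs that(1)] that lenxs by simp
  have inset: "xs!i \<in> set xs" if "i < 2*K" for i using that lenxs by simp
  define x0 where "x0 = xs!(k0-1)"
  define x1 where "x1 = xs!k0"
  define y0 where "y0 = xs!(k0+K-1)"
  define y1 where "y1 = (if k0 < K then xs!(k0+K) else xs!0 + int M)"
  define lift where "lift i = (if i < k0 then xs!i + int M else xs!i)" for i
  have Dk0: "D k0 = x1 - x0" unfolding D_def s_eq x0_def x1_def using k01 by auto
  have DkK: "D (k0+K) = y1 - y0" unfolding D_def s_eq y0_def y1_def using k01
    by (auto simp: add.commute mult_2)
  have homog: "(\<forall>i\<in>B. P1 (xs!i)) \<or> (\<forall>i\<in>B. P2 (xs!i))"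
  proof (rule ccontr)
    assume "\<not> ?thesis"
    then obtain ia ib where ia: "ia \<in> B" "\<not> P2 (xs!ia)" and ib: "ib \<in> B" "\<not> P1 (xs!ib)" by blast
    have ia': "P1 (xs!ia)" using P12 inset ia Bsub by blast
    have ib': "P2 (xs!ib)" using P12 inset ib Bsub by blast
    have out: "\<exists>j. j < 2*K \<and> j \<notin> B \<and> Q (xs!j)"
      if "card {i. i < 2*K \<and> Q (xs!i)} = K" "i0 \<in> B" "\<not> Q (xs!i0)" for Q i0
    proof (rule ccontr)
      assume "\<not> ?thesis"
      hence "{i. i < 2*K \<and> Q (xs!i)} \<subseteq> B - {i0}" using that by auto
      hence "card {i. i < 2*K \<and> Q (xs!i)} \<le> card (B - {i0})" by (intro card_mono) (auto simp: B_def)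
      also have "\<dots> < K" using that(2) cardB by (simp add: B_def)
      finally show False using that(1) by simp
    qed
    obtain iU where iU: "iU < 2*K" "iU \<notin> B" "P1 (xs!iU)" using out[OF cnt1 ib(1) ib(2)] by blast
    obtain iW where iW: "iW < 2*K" "iW \<notin> B" "P2 (xs!iW)" using out[OF cnt2 ia(1) ia(2)] by blast
    have liftb: "y1 \<le> lift j \<and> lift j \<le> x0 + int M \<and> near (int M) \<tau> c (lift j)"
      if "j < 2*K" "j \<notin> B" "near (int M) \<tau> c (xs!j)" for j c
    proof (cases "j < k0")
      case True
      have a: "xs!j \<le> x0" unfolding x0_def using True k01 by (intro nth_mono) auto
      have b: "y1 \<le> xs!j + int M"
      proof (cases "k0 < K")
        case True
        thus ?thesis unfolding y1_def using rng[OF inset[OF that(1)]] rng[OF inset[of "k0+K"]] by auto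
      next
        case False
        thus ?thesis unfolding y1_def using nth_mono[of 0 j] that by auto
      qed
      show ?thesis unfolding lift_def using True a b near_shift[OF that(3)] by auto
    next
      case False
      hence j: "k0+K \<le> j" using that unfolding B_def by auto
      hence kK: "k0 < K" using that k01 by auto
      have "y1 \<le> xs!j" unfolding y1_def using kK j that by (auto intro: nth_mono)
      moreover have "xs!j < int M" "0 \<le> x0" using rng[OF inset[OF that(1)]] rng[OF inset[of "k0-1"]] k01
        unfolding x0_def by auto
      ultimately show ?thesis unfolding lift_def using False that by auto
    qed
    have bb: "x1 \<le> xs!i \<and> xs!i \<le> y0" if "i \<in> B" for i
      using that k01 unfolding B_def x1_def y0_def by (auto intro!: nth_mono)
    have LU: "y1 \<le> lift iU \<and> lift iU \<le> x0 + int M \<and> P1 (lift iU)"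
      using liftb[OF iU(1,2)] iU(3) unfolding P1_def by blast
    have LW: "y1 \<le> lift iW \<and> lift iW \<le> x0 + int M \<and> P2 (lift iW)"
      using liftb[OF iW(1,2)] iW(3) unfolding P2_def by blast
    have x01: "x0 \<le> x1" unfolding x0_def x1_def using k01 by (intro nth_mono) auto
    have y01: "y0 \<le> y1"
    proof (cases "k0 < K")
      case True thus ?thesis unfolding y0_def y1_def using k01 by (auto intro: nth_mono)
    next
      case False
      thus ?thesis unfolding y0_def y1_def using k01 rng[OF inset[of "k0+K-1"]] rng[OF inset[of 0]] by (auto simp: mult_2)
    qed
    have "real_of_int (int M) < real_of_int (2*((x1-x0)+(y1-y0)))" using k0(2) unfolding Dk0 DkK by simp
    hence DD: "int M < 2*((x1-x0)+(y1-y0))" by (simp only: of_int_less_iff)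
    have exclN: "False" if "near (int M) \<tau> (rc 1) y" "near (int M) \<tau> (rc 2) y" for y
      using excl[of y] that unfolding P1_def P2_def by simp
    show False
      by (rule core[OF tau8 tau0 exclN x01 y01 DD, where u="xs!ia" and w="xs!ib" and U="lift iU" and W="lift iW"])
        (use bb[OF ia(1)] bb[OF ib(1)] LU LW ia' ib' in \<open>auto simp: P1_def P2_def\<close>)
  qed
  have inB: "\<exists>\<omega>\<in>#\<Omega>1. circ_dist (real M) (of_int v) (of_int \<omega>) = 0"
    if hq: "\<forall>i\<in>B. Q (xs!i)" "card {i. i < 2*K \<and> Q (xs!i)} = K" "v \<in> set xs" "Q v" for Q v
  proof -
    obtain i where i: "i < 2*K" "xs!i = v" using hq(3) lenxs by (auto simp: in_set_conv_nth)
    have "B = {i. i < 2*K \<and> Q (xs!i)}"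
      using hq(1,2) Bsub cardB by (intro card_subset_eq) auto
    hence iB: "i \<in> B" using i hq(4) by auto
    have "i+1 \<in> set [k0+1..<k0+K+1]" using iB by (auto simp: B_def)
    hence "s (i+1) \<in># \<Omega>1" unfolding \<Omega>1_def set_mset_mset set_map by (rule imageI)
    moreover have "s (i+1) = v" using i s_eq by simp
    ultimately show ?thesis using cd_self by blast
  qed
  have outB: "\<exists>\<upsilon>\<in>#\<Omega>2. circ_dist (real M) (of_int v) (of_int \<upsilon>) = 0"
    if hq: "\<forall>i\<in>B. Q (xs!i)" "v \<in> set xs" "\<not> Q v" for Q v
  proof -
    obtain i where i: "i < 2*K" "xs!i = v" using hq(2) lenxs by (auto simp: in_set_conv_nth)
    have iB: "i \<notin> B" using i hq by auto
    have sv: "s (i+1) = v" using i s_eq by simp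
    show ?thesis
    proof (cases "k0 = K")
      case True
      have "i+1 \<in> set [1..<K+1]" using iB i True by (auto simp: B_def)
      hence "s (i+1) \<in># \<Omega>2" unfolding \<Omega>2_def if_P[OF True] set_mset_mset set_map by (rule imageI)
      thus ?thesis using sv cd_self by blast
    next
      case False
      show ?thesis
      proof (cases "i < k0")
        case True
        hence "i+1 \<in> set [1..<k0+1]" by auto
        hence "s (i+1) \<in># \<Omega>2" unfolding \<Omega>2_def if_not_P[OF False] set_mset_mset set_append set_map
          by (intro UnI2 imageI)
        thus ?thesis using sv cd_self by blast
      next
        case lt: False
        hence "k0+K \<le> i" using iB by (auto simp: B_def)
        hence "i+1 \<in> set [k0+K+1..<2*K+1]" using i by auto
        hence "s (i+1) - int M \<in># \<Omega>2" unfolding \<Omega>2_def if_not_P[OF False] set_mset_mset set_append set_map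
          by (intro UnI1 imageI)
        moreover have "circ_dist (real M) (of_int v) (of_int (v - int M)) = 0"
          using cd_shift[of "real M" "of_int v"] M by simp
        ultimately show ?thesis using sv by blast
      qed
    qed
  qed
  show ?thesis
  proof
    fix k assume k: "k \<in> {1..K}"
    have kk: "k \<in> set [1..<K+1]" using k by auto
    have r1a: "rtc 1 k \<in> set xs" unfolding setxs set_append set_map by (rule UnI1, rule imageI, rule kk)
    have r1b: "rtc 2 k \<in> set xs" unfolding setxs set_append set_map by (rule UnI2, rule imageI, rule kk)
    note r1 = r1a r1b
    have p1: "P1 (rtc 1 k)" "P2 (rtc 2 k)" using nearrtc k unfolding P1_def P2_def by auto
    from homog show "\<exists>\<omega>\<in>#\<Omega>1. \<exists>\<upsilon>\<in>#\<Omega>2.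
           (circ_dist (real M) (of_int (rtc 1 k)) (of_int \<omega>) = 0 \<and>
            circ_dist (real M) (of_int (rtc 2 k)) (of_int \<upsilon>) = 0) \<or>
           (circ_dist (real M) (of_int (rtc 2 k)) (of_int \<omega>) = 0 \<and>
            circ_dist (real M) (of_int (rtc 1 k)) (of_int \<upsilon>) = 0)"
    proof
      assume h: "\<forall>i\<in>B. P1 (xs!i)"
      obtain \<omega> where "\<omega> \<in># \<Omega>1" "circ_dist (real M) (of_int (rtc 1 k)) (of_int \<omega>) = 0"
        using inB[OF h cnt1 r1(1) p1(1)] by blast
      moreover obtain \<upsilon> where "\<upsilon> \<in># \<Omega>2" "circ_dist (real M) (of_int (rtc 2 k)) (of_int \<upsilon>) = 0"
      proof -
        have "\<not> P1 (rtc 2 k)" using excl[OF _ p1(2)] by blast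
        thus ?thesis using outB[OF h r1(2)] that by blast
      qed
      ultimately show ?thesis by blast
    next
      assume h: "\<forall>i\<in>B. P2 (xs!i)"
      obtain \<omega> where "\<omega> \<in># \<Omega>1" "circ_dist (real M) (of_int (rtc 2 k)) (of_int \<omega>) = 0"
        using inB[OF h cnt2 r1(2) p1(2)] by blast
      moreover obtain \<upsilon> where "\<upsilon> \<in># \<Omega>2" "circ_dist (real M) (of_int (rtc 1 k)) (of_int \<upsilon>) = 0"
      proof -
        have "\<not> P2 (rtc 1 k)" using excl[OF p1(1)] by blast
        thus ?thesis using outB[OF h r1(1)] that by blast
      qed
      ultimately show ?thesis by blast
    qed
  qed
qed

end
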